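(* Consider two independent types of stations: for $l=1,2$, initial positions form a homogeneous Poisson point process on $\mathbb R^2$ of intensity $\lambda_l$, each station moves at speed $v_l$ in an independent uniform direction; let $\lambda=\lambda_1+\lambda_2$. Let $\mathcal H^l$ be the head point process of type-$l$ stations and $\mathcal L_e(v_1,v_2)=\{(t,L(t)):t\in\mathbb R\}$, $L(t)$ the distance to the origin of the nearest station (of either type) at time $t$. For $s\in\mathbb R$, $u>0$, $v>0$ let $E^{s,v}_u=\{(t,h):h>0,\ v^2(t-s)^2+h^2<u^2\}$. Then for every point $(s,u)$ lying on the radial bird of some station: (i) $(s,u)\in\mathcal L_e(v_1,v_2)$ if and only if $\mathcal H^l(E^{s,v_l}_u)=0$ for $l=1,2$; (ii) the event in (i) has probability $e^{-\lambda\pi u^2}$, i.e. $\mathbb P(\mathcal H^1(E^{s,v_1}_u)=0,\ \mathcal H^2(E^{s,v_2}_u)=0)=e^{-\lambda\pi u^2}$.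
   Context: The head $(T,H)$ of a type-$l$ station is the time and value of its minimal distance to the origin; its radial bird is $\{(t,(v_l^2(t-T)^2+H^2)^{1/2}):t\in\mathbb R\}$. $\mathcal H^l$ is a Poisson process of intensity $v_l\,dt\otimes2\lambda_l\,dh$, and $\mathcal H^1,\mathcal H^2$ are independent. *)

theory Defs
  imports "HOL-Probability.Probability"
begin

text \<open>Radial bird of a station of speed v with head (T,H): its distance to the origin at time t.\<close>
definition bird :: "real \<Rightarrow> real \<times> real \<Rightarrow> real \<Rightarrow> real" where
  "bird v p t = sqrt (v\<^sup>2 * (t - fst p)\<^sup>2 + (snd p)\<^sup>2)"

definition E_set :: "real \<Rightarrow> real \<Rightarrow> real \<Rightarrow> (real \<times> real) set" where
  "E_set s v u = {(t, h). h > 0 \<and> v\<^sup>2 * (t - s)\<^sup>2 + h\<^sup>2 < u\<^sup>2}"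

definition pp_space :: "(real \<times> real) set measure" where
  "pp_space = sigma UNIV
     (\<Union>B\<in>sets (borel :: (real \<times> real) measure). \<Union>k::nat.
        {{X. finite (X \<inter> B) \<and> card (X \<inter> B) = k}})"

definition poisson_pp ::
  "'a measure \<Rightarrow> ('a \<Rightarrow> (real \<times> real) set) \<Rightarrow> (real \<times> real) measure \<Rightarrow> bool" where
  "poisson_pp M N \<mu> \<longleftrightarrow>
     prob_space M \<and> sets \<mu> = sets borel \<and> N \<in> M \<rightarrow>\<^sub>M pp_space \<and>
     (\<forall>B\<in>sets borel. emeasure \<mu> B < \<infinity> \<longrightarrow>
        (AE \<omega> in M. finite (N \<omega> \<inter> B)) \<and>
        (\<forall>k::nat. measure M {\<omega>\<in>space M. finite (N \<omega> \<inter> B) \<and> card (N \<omega> \<inter> B) = k}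
                  = exp (- measure \<mu> B) * measure \<mu> B ^ k / fact k)) \<and>
     (\<forall>(I :: nat set) B. finite I \<longrightarrow> disjoint_family_on B I \<longrightarrow>
        (\<forall>i\<in>I. B i \<in> sets borel \<and> emeasure \<mu> (B i) < \<infinity>) \<longrightarrow>
        prob_space.indep_vars M (\<lambda>_. count_space UNIV) (\<lambda>i \<omega>. card (N \<omega> \<inter> B i)) I)"

definition head_intensity :: "real \<Rightarrow> real \<Rightarrow> (real \<times> real) measure" where
  "head_intensity v lam =
     density lborel (\<lambda>x. ennreal (v * (2 * lam)) * indicator {p. snd p > 0} x)"

definition nearest_dist ::
  "real \<Rightarrow> real \<Rightarrow> (real \<times> real) set \<Rightarrow> (real \<times> real) set \<Rightarrow> real \<Rightarrow> real" where
  "nearest_dist v1 v2 H1 H2 t =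
     Inf ((\<lambda>p. bird v1 p t) ` H1 \<union> (\<lambda>p. bird v2 p t) ` H2)"

definition lower_env ::
  "real \<Rightarrow> real \<Rightarrow> (real \<times> real) set \<Rightarrow> (real \<times> real) set \<Rightarrow> (real \<times> real) set" where
  "lower_env v1 v2 H1 H2 = {(t, nearest_dist v1 v2 H1 H2 t) | t. True}"

end

theory Submission
  imports Defs
begin

lemma abs_lt_sqrt_max: "\<bar>y::real\<bar> < sqrt (max 0 b) \<longleftrightarrow> y\<^sup>2 < b"
proof -
  have "\<bar>y\<bar> < sqrt (max 0 b) \<longleftrightarrow> sqrt (y\<^sup>2) < sqrt (max 0 b)" by (simp add: real_sqrt_abs)
  also have "\<dots> \<longleftrightarrow> y\<^sup>2 < max 0 b" by (rule real_sqrt_less_iff)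
  also have "\<dots> \<longleftrightarrow> y\<^sup>2 < b" by (smt (verit) zero_le_power2)
  finally show ?thesis .
qed

lemma ball_section:
  fixes r x :: real assumes "r > 0"
  shows "Pair x -` ball (0::real\<times>real) r = {- sqrt (max 0 (r\<^sup>2 - x\<^sup>2))<..<sqrt (max 0 (r\<^sup>2 - x\<^sup>2))}"
proof -
  have "y \<in> Pair x -` ball 0 r \<longleftrightarrow> \<bar>y\<bar> < sqrt (max 0 (r\<^sup>2 - x\<^sup>2))" for y
  proof -
    have "y \<in> Pair x -` ball 0 r \<longleftrightarrow> sqrt (x\<^sup>2 + y\<^sup>2) < sqrt (r\<^sup>2)"
      using assms by (simp add: norm_Pair)
    also have "\<dots> \<longleftrightarrow> x\<^sup>2 + y\<^sup>2 < r\<^sup>2"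
      by (rule real_sqrt_less_iff)
    also have "\<dots> \<longleftrightarrow> \<bar>y\<bar> < sqrt (max 0 (r\<^sup>2 - x\<^sup>2))"
      by (simp add: abs_lt_sqrt_max algebra_simps)
    finally show ?thesis .
  qed
  then show ?thesis by auto
qed

lemma half_disc:
  fixes r :: real assumes r: "r > 0"
  shows "(\<integral>\<^sup>+x. ennreal (sqrt (max 0 (r\<^sup>2 - x\<^sup>2))) \<partial>lborel) = ennreal (pi * r\<^sup>2 / 2)"
proof -
  have "ennreal (pi * r\<^sup>2) = emeasure lborel (ball (0::real\<times>real) r)"
    using r by (simp add: emeasure_ball eval_unit_ball_vol power2_eq_square)
  also have "\<dots> = emeasure (lborel \<Otimes>\<^sub>M lborel) (ball (0::real\<times>real) r)"
    by (simp add: lborel_prod)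
  also have "\<dots> = (\<integral>\<^sup>+x. emeasure lborel (Pair x -` ball (0::real\<times>real) r) \<partial>lborel)"
    by (rule lborel.emeasure_pair_measure_alt) (subst lborel_prod, simp)
  also have "\<dots> = (\<integral>\<^sup>+x. 2 * ennreal (sqrt (max 0 (r\<^sup>2 - x\<^sup>2))) \<partial>lborel)"
    using r by (intro nn_integral_cong) (simp add: ball_section ennreal_mult)
  also have "\<dots> = 2 * (\<integral>\<^sup>+x. ennreal (sqrt (max 0 (r\<^sup>2 - x\<^sup>2))) \<partial>lborel)"
    by (rule nn_integral_cmult) measurable
  finally have eq: "ennreal (pi * r\<^sup>2) = 2 * (\<integral>\<^sup>+x. ennreal (sqrt (max 0 (r\<^sup>2 - x\<^sup>2))) \<partial>lborel)" .
  have "ennreal (pi * r\<^sup>2) = 2 * ennreal (pi * r\<^sup>2 / 2)"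
    by (subst ennreal_numeral[symmetric], subst ennreal_mult[symmetric]) auto
  with eq show ?thesis
    by (simp add: ennreal_mult_cancel_left)
qed

lemma E_set_borel: "E_set s v u \<in> sets borel"
proof -
  have "E_set s v u = {x. 0 < snd x \<and> v\<^sup>2 * (fst x - s)\<^sup>2 + (snd x)\<^sup>2 < u\<^sup>2}"
    by (auto simp: E_set_def)
  also have "open \<dots>" by (intro open_Collect_conj open_Collect_less continuous_intros)
  then have "\<dots> \<in> sets borel" by simp
  finally show ?thesis .
qed

lemma E_section:
  fixes u v s t :: real assumes "u > 0"
  shows "Pair t -` E_set s v u = {0<..<sqrt (max 0 (u\<^sup>2 - (- v * s + v * t)\<^sup>2))}"
proof -
  have "h \<in> Pair t -` E_set s v u \<longleftrightarrow> h \<in> {0<..<sqrt (max 0 (u\<^sup>2 - (- v * s + v * t)\<^sup>2))}" for h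
  proof -
    have "(- v * s + v * t)\<^sup>2 = v\<^sup>2 * (t - s)\<^sup>2" by (simp add: power_mult_distrib[symmetric] algebra_simps)
    moreover have "h > 0 \<Longrightarrow> h < sqrt (max 0 b) \<longleftrightarrow> h\<^sup>2 < b" for b
      using abs_lt_sqrt_max[of h b] by simp
    ultimately have "h \<in> {0<..<sqrt (max 0 (u\<^sup>2 - (- v * s + v * t)\<^sup>2))} \<longleftrightarrow> 0 < h \<and> h\<^sup>2 < u\<^sup>2 - v\<^sup>2 * (t - s)\<^sup>2"
      by auto
    moreover have "h \<in> Pair t -` E_set s v u \<longleftrightarrow> 0 < h \<and> v\<^sup>2 * (t - s)\<^sup>2 + h\<^sup>2 < u\<^sup>2"
      by (simp add: E_set_def)
    ultimately show ?thesis by linarith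
  qed
  then show ?thesis by blast
qed

lemma E_lborel:
  fixes u v s :: real assumes u: "u > 0" and v: "v > 0"
  shows "emeasure lborel (E_set s v u) = ennreal (pi * u\<^sup>2 / 2 / v)"
proof -
  let ?g = "\<lambda>x. ennreal (sqrt (max 0 (u\<^sup>2 - x\<^sup>2)))"
  have "emeasure lborel (E_set s v u) = emeasure (lborel \<Otimes>\<^sub>M lborel) (E_set s v u)"
    by (simp add: lborel_prod)
  also have "\<dots> = (\<integral>\<^sup>+t. emeasure lborel (Pair t -` E_set s v u) \<partial>lborel)"
    by (rule lborel.emeasure_pair_measure_alt) (subst lborel_prod, simp add: E_set_borel)
  also have "\<dots> = (\<integral>\<^sup>+t. ?g (- v * s + v * t) \<partial>lborel)"
    using u by (intro nn_integral_cong) (simp add: E_section)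
  finally have 1: "emeasure lborel (E_set s v u) = (\<integral>\<^sup>+t. ?g (- v * s + v * t) \<partial>lborel)" .
  have "ennreal (pi * u\<^sup>2 / 2) = (\<integral>\<^sup>+x. ?g x \<partial>lborel)" using half_disc[OF u] by simp
  also have "\<dots> = ennreal v * (\<integral>\<^sup>+t. ?g (- v * s + v * t) \<partial>lborel)"
    using v by (subst nn_integral_real_affine[where c=v and t="- v * s"]) auto
  finally have 2: "ennreal (pi * u\<^sup>2 / 2) = ennreal v * emeasure lborel (E_set s v u)"
    using 1 by simp
  have "ennreal (pi * u\<^sup>2 / 2 / v) = ennreal (1/v) * ennreal (pi * u\<^sup>2 / 2)"
    using v by (simp add: ennreal_mult'[symmetric])
  also have "\<dots> = ennreal (1/v) * ennreal v * emeasure lborel (E_set s v u)"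
    using 2 by (simp add: mult.assoc)
  also have "ennreal (1/v) * ennreal v = 1"
    using v by (simp add: ennreal_mult'[symmetric])
  finally show ?thesis by simp
qed

lemma E_head:
  fixes u v s lam :: real assumes u: "u > 0" and v: "v > 0" and lam: "lam > 0"
  shows "emeasure (head_intensity v lam) (E_set s v u) = ennreal (lam * pi * u\<^sup>2)"
proof -
  have [measurable]: "{p::real\<times>real. 0 < snd p} \<in> sets borel"
    by (intro borel_open open_Collect_less continuous_intros)
  have "emeasure (head_intensity v lam) (E_set s v u)
      = (\<integral>\<^sup>+x. ennreal (v * (2 * lam)) * indicator (E_set s v u) x \<partial>lborel)"
    unfolding head_intensity_def
  proof (subst emeasure_density)
    show "(\<integral>\<^sup>+ x\<in>E_set s v u. ennreal (v * (2 * lam)) * indicator {p. 0 < snd p} x \<partial>lborel)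
      = (\<integral>\<^sup>+x. ennreal (v * (2 * lam)) * indicator (E_set s v u) x \<partial>lborel)"
      by (intro nn_integral_cong) (auto simp: E_set_def indicator_def)
  qed (auto simp: E_set_borel)
  also have "\<dots> = ennreal (v * (2 * lam)) * emeasure lborel (E_set s v u)"
    by (simp add: E_set_borel nn_integral_cmult_indicator)
  also have "\<dots> = ennreal (lam * pi * u\<^sup>2)"
    using u v lam by (simp add: E_lborel ennreal_mult'[symmetric])
  finally show ?thesis .
qed

lemma pp_prob_space: "poisson_pp M N \<mu> \<Longrightarrow> prob_space M"
  by (simp add: poisson_pp_def)

lemma pp_empty_set: "B \<in> sets borel \<Longrightarrow> {X. X \<inter> B = {}} \<in> sets pp_space"
proof -
  assume B: "B \<in> sets borel"
  have eq: "{X. X \<inter> B = {}} = {X. finite (X \<inter> B) \<and> card (X \<inter> B) = (0::nat)}"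
    by auto
  have "{X. finite (X \<inter> B) \<and> card (X \<inter> B) = (0::nat)}
     \<in> (\<Union>B\<in>sets (borel :: (real \<times> real) measure). \<Union>k::nat.
        {{X. finite (X \<inter> B) \<and> card (X \<inter> B) = k}})"
    using B by blast
  then show ?thesis unfolding eq pp_space_def
    by (subst sets_measure_of) auto
qed

lemma pp_empty_event:
  assumes "poisson_pp M N \<mu>" "B \<in> sets borel"
  shows "{\<omega>\<in>space M. N \<omega> \<inter> B = {}} \<in> sets M"
proof -
  have N: "N \<in> M \<rightarrow>\<^sub>M pp_space" using assms(1) by (simp add: poisson_pp_def)
  have "N -` {X. X \<inter> B = {}} \<inter> space M \<in> sets M"
    by (rule measurable_sets[OF N pp_empty_set[OF assms(2)]])
  moreover have "N -` {X. X \<inter> B = {}} \<inter> space M = {\<omega>\<in>space M. N \<omega> \<inter> B = {}}" by auto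
  ultimately show ?thesis by simp
qed

lemma pp_empty_prob:
  assumes "poisson_pp M N \<mu>" "B \<in> sets borel" "emeasure \<mu> B < \<infinity>"
  shows "measure M {\<omega>\<in>space M. N \<omega> \<inter> B = {}} = exp (- measure \<mu> B)"
proof -
  have "measure M {\<omega>\<in>space M. finite (N \<omega> \<inter> B) \<and> card (N \<omega> \<inter> B) = 0}
         = exp (- measure \<mu> B) * measure \<mu> B ^ 0 / fact 0"
    using assms unfolding poisson_pp_def by blast
  moreover have "{\<omega>\<in>space M. finite (N \<omega> \<inter> B) \<and> card (N \<omega> \<inter> B) = 0} = {\<omega>\<in>space M. N \<omega> \<inter> B = {}}"
    by auto
  ultimately show ?thesis by simp
qed

lemma lower_half_borel: "{p::real\<times>real. snd p \<le> 0} \<in> sets borel"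
  by (intro borel_closed closed_Collect_le continuous_intros)

lemma upper_half_borel: "{p::real\<times>real. 0 < snd p} \<in> sets borel"
  by (intro borel_open open_Collect_less continuous_intros)

lemma head_lower_half: "emeasure (head_intensity v lam) {p. snd p \<le> 0} = 0"
  unfolding head_intensity_def
proof (subst emeasure_density)
  have [measurable]: "{p::real\<times>real. 0 < snd p} \<in> sets borel"
    by (intro borel_open open_Collect_less continuous_intros)
  show "(\<lambda>x::real\<times>real. ennreal (v * (2 * lam)) * indicator {p. 0 < snd p} x) \<in> borel_measurable lborel"
    by (intro borel_measurable_times_ennreal borel_measurable_const borel_measurable_indicator)
       (simp add: upper_half_borel)
  show "{p::real\<times>real. snd p \<le> 0} \<in> sets lborel" using lower_half_borel by simp
  show "(\<integral>\<^sup>+ x\<in>{p::real\<times>real. snd p \<le> 0}. ennreal (v * (2 * lam)) * indicator {p. 0 < snd p} x \<partial>lborel) = 0"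
  proof -
    have "(\<integral>\<^sup>+ x\<in>{p::real\<times>real. snd p \<le> 0}. ennreal (v * (2 * lam)) * indicator {p. 0 < snd p} x \<partial>lborel)
       = (\<integral>\<^sup>+ x. 0 \<partial>(lborel :: (real \<times> real) measure))"
      by (intro nn_integral_cong) (auto simp: indicator_def)
    then show ?thesis by simp
  qed
qed

lemma AE_upper:
  assumes "poisson_pp M N (head_intensity v lam)"
  shows "AE \<omega> in M. N \<omega> \<inter> {p. snd p \<le> 0} = {}"
proof -
  interpret prob_space M using pp_prob_space[OF assms] .
  have "prob {\<omega>\<in>space M. N \<omega> \<inter> {p. snd p \<le> 0} = {}} = 1"
    using pp_empty_prob[OF assms lower_half_borel] head_lower_half
    by (simp add: measure_def)
  from AE_prob_1[OF this] show ?thesis by auto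
qed

lemma E_bird:
  assumes u: "u > 0" and p: "snd p > 0"
  shows "p \<in> E_set s v u \<longleftrightarrow> bird v p s < u"
proof -
  have "bird v p s < u \<longleftrightarrow> sqrt (v\<^sup>2 * (s - fst p)\<^sup>2 + (snd p)\<^sup>2) < sqrt (u\<^sup>2)"
    using u by (simp add: bird_def)
  also have "\<dots> \<longleftrightarrow> v\<^sup>2 * (s - fst p)\<^sup>2 + (snd p)\<^sup>2 < u\<^sup>2" by (rule real_sqrt_less_iff)
  also have "(s - fst p)\<^sup>2 = (fst p - s)\<^sup>2" by (simp add: power2_commute)
  finally show ?thesis using p by (cases p) (simp add: E_set_def)
qed

lemma bird_nonneg: "bird v p t \<ge> 0"
  by (simp add: bird_def)

lemma deterministic:
  assumes u: "u > 0"
    and up1: "H1 \<inter> {p. snd p \<le> 0} = {}" and up2: "H2 \<inter> {p. snd p \<le> 0} = {}"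
    and att: "(\<exists>p\<in>H1. u = bird v1 p s) \<or> (\<exists>p\<in>H2. u = bird v2 p s)"
  shows "(s, u) \<in> lower_env v1 v2 H1 H2 \<longleftrightarrow> H1 \<inter> E_set s v1 u = {} \<and> H2 \<inter> E_set s v2 u = {}"
proof -
  define S where "S = (\<lambda>p. bird v1 p s) ` H1 \<union> (\<lambda>p. bird v2 p s) ` H2"
  have uS: "u \<in> S" using att unfolding S_def by auto
  have bdd: "bdd_below S" unfolding S_def
    by (rule bdd_belowI[of _ 0]) (auto simp: bird_nonneg)
  have "(s, u) \<in> lower_env v1 v2 H1 H2 \<longleftrightarrow> u = Inf S"
    unfolding lower_env_def nearest_dist_def S_def by auto
  also have "\<dots> \<longleftrightarrow> (\<forall>x\<in>S. u \<le> x)"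
  proof
    assume "u = Inf S" then show "\<forall>x\<in>S. u \<le> x" using bdd by (auto intro: cInf_lower)
  next
    assume "\<forall>x\<in>S. u \<le> x" then show "u = Inf S" using uS by (simp add: cInf_eq_minimum)
  qed
  also have "\<dots> \<longleftrightarrow> H1 \<inter> E_set s v1 u = {} \<and> H2 \<inter> E_set s v2 u = {}"
  proof -
    have pos1: "p \<in> H1 \<Longrightarrow> snd p > 0" for p using up1 by force
    have pos2: "p \<in> H2 \<Longrightarrow> snd p > 0" for p using up2 by force
    have e1: "p \<in> H1 \<Longrightarrow> p \<in> E_set s v1 u \<longleftrightarrow> bird v1 p s < u" for p
      using E_bird[OF u pos1] by blast
    have e2: "p \<in> H2 \<Longrightarrow> p \<in> E_set s v2 u \<longleftrightarrow> bird v2 p s < u" for p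
      using E_bird[OF u pos2] by blast
    have "(\<forall>x\<in>S. u \<le> x) \<longleftrightarrow> (\<forall>p\<in>H1. \<not> bird v1 p s < u) \<and> (\<forall>p\<in>H2. \<not> bird v2 p s < u)"
      unfolding S_def by (auto simp: not_less)
    also have "\<dots> \<longleftrightarrow> H1 \<inter> E_set s v1 u = {} \<and> H2 \<inter> E_set s v2 u = {}"
      using e1 e2 by blast
    finally show ?thesis .
  qed
  finally show ?thesis .
qed

lemma E_measure:
  assumes "u > 0" "v > 0" "lam > 0"
  shows "measure (head_intensity v lam) (E_set s v u) = lam * pi * u\<^sup>2"
  using E_head[OF assms] assms by (simp add: measure_def)

theorem lemma7p4:
  fixes M :: "'a measure" and H1 H2 :: "'a \<Rightarrow> (real \<times> real) set"
    and v1 v2 lam1 lam2 :: real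
  assumes "v1 > 0" "v2 > 0" "lam1 > 0" "lam2 > 0"
    and "poisson_pp M H1 (head_intensity v1 lam1)"
    and "poisson_pp M H2 (head_intensity v2 lam2)"
    and "prob_space.indep_var M pp_space H1 pp_space H2"
  shows "(AE \<omega> in M. \<forall>s u. u > 0 \<longrightarrow>
            ((\<exists>p\<in>H1 \<omega>. u = bird v1 p s) \<or> (\<exists>p\<in>H2 \<omega>. u = bird v2 p s)) \<longrightarrow>
            ((s, u) \<in> lower_env v1 v2 (H1 \<omega>) (H2 \<omega>) \<longleftrightarrow>
               H1 \<omega> \<inter> E_set s v1 u = {} \<and> H2 \<omega> \<inter> E_set s v2 u = {}))
       \<and> (\<forall>s u. u > 0 \<longrightarrow>
            measure M {\<omega>\<in>space M. H1 \<omega> \<inter> E_set s v1 u = {} \<and> H2 \<omega> \<inter> E_set s v2 u = {}}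
              = exp (- (lam1 + lam2) * pi * u\<^sup>2))"
proof
  interpret prob_space M using pp_prob_space[OF assms(5)] .
  show "AE \<omega> in M. \<forall>s u. u > 0 \<longrightarrow>
            ((\<exists>p\<in>H1 \<omega>. u = bird v1 p s) \<or> (\<exists>p\<in>H2 \<omega>. u = bird v2 p s)) \<longrightarrow>
            ((s, u) \<in> lower_env v1 v2 (H1 \<omega>) (H2 \<omega>) \<longleftrightarrow>
               H1 \<omega> \<inter> E_set s v1 u = {} \<and> H2 \<omega> \<inter> E_set s v2 u = {})"
    using AE_upper[OF assms(5)] AE_upper[OF assms(6)]
  proof eventually_elim
    case (elim \<omega>)
    then show ?case using deterministic by blast
  qed
  show "\<forall>s u. u > 0 \<longrightarrow>
            measure M {\<omega>\<in>space M. H1 \<omega> \<inter> E_set s v1 u = {} \<and> H2 \<omega> \<inter> E_set s v2 u = {}}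
              = exp (- (lam1 + lam2) * pi * u\<^sup>2)"
  proof (intro allI impI)
    fix s u :: real assume u: "u > 0"
    define A1 where "A1 = {\<omega>\<in>space M. H1 \<omega> \<inter> E_set s v1 u = {}}"
    define A2 where "A2 = {\<omega>\<in>space M. H2 \<omega> \<inter> E_set s v2 u = {}}"
    have ind: "indep_set
      (sigma_sets (space M) { H1 -` A \<inter> space M | A. A \<in> sets pp_space})
      (sigma_sets (space M) { H2 -` A \<inter> space M | A. A \<in> sets pp_space})"
      using assms(7) by (simp add: indep_var_eq)
    have a1: "A1 \<in> sigma_sets (space M) { H1 -` A \<inter> space M | A. A \<in> sets pp_space}"
    proof (rule sigma_sets.Basic)
      have eq: "A1 = H1 -` {X. X \<inter> E_set s v1 u = {}} \<inter> space M" by (auto simp: A1_def)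
      show "A1 \<in> { H1 -` A \<inter> space M | A. A \<in> sets pp_space}"
        unfolding eq using pp_empty_set[OF E_set_borel[of s v1 u]] by blast
    qed
    have a2: "A2 \<in> sigma_sets (space M) { H2 -` A \<inter> space M | A. A \<in> sets pp_space}"
    proof (rule sigma_sets.Basic)
      have eq: "A2 = H2 -` {X. X \<inter> E_set s v2 u = {}} \<inter> space M" by (auto simp: A2_def)
      show "A2 \<in> { H2 -` A \<inter> space M | A. A \<in> sets pp_space}"
        unfolding eq using pp_empty_set[OF E_set_borel[of s v2 u]] by blast
    qed
    have p1: "prob A1 = exp (- (lam1 * pi * u\<^sup>2))"
      unfolding A1_def
      using pp_empty_prob[OF assms(5) E_set_borel[of s v1 u]] E_head[OF u assms(1,3), of s] E_measure[OF u assms(1,3), of s]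
      by simp
    have p2: "prob A2 = exp (- (lam2 * pi * u\<^sup>2))"
      unfolding A2_def
      using pp_empty_prob[OF assms(6) E_set_borel[of s v2 u]] E_head[OF u assms(2,4), of s] E_measure[OF u assms(2,4), of s]
      by simp
    have "{\<omega>\<in>space M. H1 \<omega> \<inter> E_set s v1 u = {} \<and> H2 \<omega> \<inter> E_set s v2 u = {}} = A1 \<inter> A2"
      unfolding A1_def A2_def by auto
    then have "measure M {\<omega>\<in>space M. H1 \<omega> \<inter> E_set s v1 u = {} \<and> H2 \<omega> \<inter> E_set s v2 u = {}}
       = prob A1 * prob A2"
      using indep_setD[OF ind a1 a2] by simp
    also have "\<dots> = exp (- (lam1 + lam2) * pi * u\<^sup>2)"
      unfolding p1 p2 by (simp add: exp_add[symmetric] algebra_simps)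
    finally show "measure M {\<omega>\<in>space M. H1 \<omega> \<inter> E_set s v1 u = {} \<and> H2 \<omega> \<inter> E_set s v2 u = {}}
       = exp (- (lam1 + lam2) * pi * u\<^sup>2)" .
  qed
qed

end
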